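(* Let $d\ge1$ and let $f:\{0,1\}^n\to\{0,1\}$ be a depth-$d$ decision tree with polynomial representation $f=M_1+M_2+\cdots+M_t$ over $\mathbb{F}_2$. Let $M_i=x_{i_1}\cdots x_{i_{d'}}$ (with $d'\le d$) be a maximal monomial of $f$. Then for all $\xi_1,\dots,\xi_{d'}\in\{0,1\}$, the function $f_{|x_{i_1}\gets\xi_1,\dots,x_{i_{d'}}\gets\xi_{d'}}$ is a depth-$(d-1)$ decision tree.
   Context: A decision tree over $x_1,\dots,x_n$ is a rooted binary tree whose internal nodes are labeled by variables, each having a 0-child and a 1-child, leaves labeled $0$ or $1$; it computes a Boolean function by following from the root the $x_i$-child at a node labeled $x_i$; a depth-$d$ decision tree is a function computed by such a tree with every root-to-leaf path having at most $d$ edges. Every Boolean function has a unique representation as a sum over $\mathbb{F}_2$ of distinct monomials (products of distinct variables; the empty product is the constant $1$). A monomial $M_i$ of $f$ is maximal if no other monomial $M_j$ of $f$ contains all variables of $M_i$. $f_{|x_{i_1}\gets\xi_1,\dots}$ denotes the function obtained by substituting $x_{i_r}=\xi_r$. *)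

theory Defs
  imports Main
begin

datatype dtree = Leaf bool | Node nat dtree dtree

fun dt_eval :: "dtree \<Rightarrow> (nat \<Rightarrow> bool) \<Rightarrow> bool" where
  "dt_eval (Leaf b) x = b"
| "dt_eval (Node i t0 t1) x = (if x i then dt_eval t1 x else dt_eval t0 x)"

fun dt_depth :: "dtree \<Rightarrow> nat" where
  "dt_depth (Leaf b) = 0"
| "dt_depth (Node i t0 t1) = Suc (max (dt_depth t0) (dt_depth t1))"

fun dt_vars :: "dtree \<Rightarrow> nat set" where
  "dt_vars (Leaf b) = {}"
| "dt_vars (Node i t0 t1) = insert i (dt_vars t0 \<union> dt_vars t1)"

definition is_depth_dt :: "nat \<Rightarrow> nat \<Rightarrow> ((nat \<Rightarrow> bool) \<Rightarrow> bool) \<Rightarrow> bool" where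
  "is_depth_dt n d f \<longleftrightarrow> (\<exists>T. dt_vars T \<subseteq> {..<n} \<and> dt_depth T \<le> d \<and> dt_eval T = f)"

text \<open>M is the F_2 polynomial representation of f: a set of distinct monomials
  (each monomial = set of its variables, empty set = constant 1) whose sum over F_2 is f.\<close>
definition is_F2_poly_rep :: "nat \<Rightarrow> ((nat \<Rightarrow> bool) \<Rightarrow> bool) \<Rightarrow> nat set set \<Rightarrow> bool" where
  "is_F2_poly_rep n f M \<longleftrightarrow> M \<subseteq> Pow {..<n} \<and>
     (\<forall>x. f x = odd (card {S \<in> M. \<forall>i\<in>S. x i}))"

definition maximal_monomial :: "nat set set \<Rightarrow> nat set \<Rightarrow> bool" where
  "maximal_monomial M S \<longleftrightarrow> S \<in> M \<and> (\<forall>T\<in>M. T \<noteq> S \<longrightarrow> \<not> S \<subseteq> T)"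

definition restrict_fun :: "((nat \<Rightarrow> bool) \<Rightarrow> bool) \<Rightarrow> nat set \<Rightarrow> (nat \<Rightarrow> bool) \<Rightarrow> (nat \<Rightarrow> bool) \<Rightarrow> bool" where
  "restrict_fun f S \<xi> = (\<lambda>x. f (\<lambda>i. if i \<in> S then \<xi> i else x i))"

end

theory Submission
  imports Defs
begin

definition upd :: "(nat \<Rightarrow> bool) \<Rightarrow> nat set \<Rightarrow> nat set \<Rightarrow> nat \<Rightarrow> bool" where
  "upd y S A = (\<lambda>i. if i \<in> S then i \<in> A else y i)"

lemma simple_restr:
  "\<exists>T'. dt_vars T' \<subseteq> dt_vars T \<and> dt_depth T' \<le> dt_depth T \<and>
     (\<forall>x. dt_eval T' x = dt_eval T (\<lambda>i. if i \<in> S then \<xi> i else x i))"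
proof (induction T)
  case (Leaf b)
  then show ?case by (intro exI[of _ "Leaf b"]) auto
next
  case (Node r t0 t1)
  from Node.IH obtain T0 T1 where
    h0: "dt_vars T0 \<subseteq> dt_vars t0 \<and> dt_depth T0 \<le> dt_depth t0 \<and>
     (\<forall>x. dt_eval T0 x = dt_eval t0 (\<lambda>i. if i \<in> S then \<xi> i else x i))" and
    h1: "dt_vars T1 \<subseteq> dt_vars t1 \<and> dt_depth T1 \<le> dt_depth t1 \<and>
     (\<forall>x. dt_eval T1 x = dt_eval t1 (\<lambda>i. if i \<in> S then \<xi> i else x i))" by blast
  show ?case
  proof (cases "r \<in> S")
    case True
    show ?thesis
    proof (cases "\<xi> r")
      case True
      with \<open>r \<in> S\<close> h1 show ?thesis by (intro exI[of _ T1]) auto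
    next
      case False
      with \<open>r \<in> S\<close> h0 show ?thesis by (intro exI[of _ T0]) auto
    qed
  next
    case False
    with h0 h1 show ?thesis by (intro exI[of _ "Node r T0 T1"]) auto
  qed
qed

lemma leaf_even:
  assumes "finite S" "S \<noteq> {}"
  shows "\<not> odd (card {A \<in> Pow S. b})"
proof -
  have "card (Pow S) = 2 ^ card S" using assms by (simp add: card_Pow)
  moreover have "card S > 0" using assms by auto
  ultimately have "even (card (Pow S))" by auto
  then show ?thesis by (cases b) (auto simp: Pow_def)
qed

lemma key:
  assumes "finite S" "S \<noteq> {}"
  shows "S \<inter> D = {} \<Longrightarrow>
    (\<forall>y. (\<forall>i\<in>D. y i = c i) \<longrightarrow> odd (card {A\<in>Pow S. dt_eval T (upd y S A)})) \<Longrightarrow>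
    \<exists>T'. dt_vars T' \<subseteq> dt_vars T \<and> dt_depth T' + 1 \<le> dt_depth T \<and>
      (\<forall>x. (\<forall>i\<in>D. x i = c i) \<longrightarrow> dt_eval T' x = dt_eval T (\<lambda>i. if i\<in>S then \<xi> i else x i))"
proof (induction T arbitrary: D c)
  case (Leaf b)
  from Leaf.prems(2)[rule_format, of c] have "odd (card {A \<in> Pow S. b})" by simp
  with leaf_even[OF assms] show ?case by blast
next
  case (Node r t0 t1)
  show ?case
  proof (cases "r \<in> S")
    case True
    show ?thesis
    proof (cases "\<xi> r")
      case True
      obtain T' where "dt_vars T' \<subseteq> dt_vars t1 \<and> dt_depth T' \<le> dt_depth t1 \<and>
     (\<forall>x. dt_eval T' x = dt_eval t1 (\<lambda>i. if i \<in> S then \<xi> i else x i))"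
        using simple_restr by blast
      with True \<open>r \<in> S\<close> show ?thesis by (intro exI[of _ T']) auto
    next
      case False
      obtain T' where "dt_vars T' \<subseteq> dt_vars t0 \<and> dt_depth T' \<le> dt_depth t0 \<and>
     (\<forall>x. dt_eval T' x = dt_eval t0 (\<lambda>i. if i \<in> S then \<xi> i else x i))"
        using simple_restr by blast
      with False \<open>r \<in> S\<close> show ?thesis by (intro exI[of _ T']) auto
    qed
  next
    case rS: False
    show ?thesis
    proof (cases "r \<in> D")
      case rD: True
      show ?thesis
      proof (cases "c r")
        case True
        have "\<forall>y. (\<forall>i\<in>D. y i = c i) \<longrightarrow> odd (card {A\<in>Pow S. dt_eval t1 (upd y S A)})"
        proof (intro allI impI)
          fix y assume y: "\<forall>i\<in>D. y i = c i"
          have "{A\<in>Pow S. dt_eval t1 (upd y S A)} = {A\<in>Pow S. dt_eval (Node r t0 t1) (upd y S A)}"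
            using y rD rS True by (auto simp: upd_def)
          then show "odd (card {A\<in>Pow S. dt_eval t1 (upd y S A)})" using Node.prems(2) y by simp
        qed
        from Node.IH(2)[OF Node.prems(1) this] obtain T' where
          T': "dt_vars T' \<subseteq> dt_vars t1 \<and> dt_depth T' + 1 \<le> dt_depth t1 \<and>
      (\<forall>x. (\<forall>i\<in>D. x i = c i) \<longrightarrow> dt_eval T' x = dt_eval t1 (\<lambda>i. if i\<in>S then \<xi> i else x i))"
          by blast
        show ?thesis using T' rD rS True by (intro exI[of _ T']) auto
      next
        case False
        have "\<forall>y. (\<forall>i\<in>D. y i = c i) \<longrightarrow> odd (card {A\<in>Pow S. dt_eval t0 (upd y S A)})"
        proof (intro allI impI)
          fix y assume y: "\<forall>i\<in>D. y i = c i"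
          have "{A\<in>Pow S. dt_eval t0 (upd y S A)} = {A\<in>Pow S. dt_eval (Node r t0 t1) (upd y S A)}"
            using y rD rS False by (auto simp: upd_def)
          then show "odd (card {A\<in>Pow S. dt_eval t0 (upd y S A)})" using Node.prems(2) y by simp
        qed
        from Node.IH(1)[OF Node.prems(1) this] obtain T' where
          T': "dt_vars T' \<subseteq> dt_vars t0 \<and> dt_depth T' + 1 \<le> dt_depth t0 \<and>
      (\<forall>x. (\<forall>i\<in>D. x i = c i) \<longrightarrow> dt_eval T' x = dt_eval t0 (\<lambda>i. if i\<in>S then \<xi> i else x i))"
          by blast
        show ?thesis using T' rD rS False by (intro exI[of _ T']) auto
      qed
    next
      case rD: False
      have d1: "S \<inter> insert r D = {}" using Node.prems(1) rS by auto
      have p1: "\<forall>y. (\<forall>i\<in>insert r D. y i = (c(r:=True)) i) \<longrightarrow> odd (card {A\<in>Pow S. dt_eval t1 (upd y S A)})"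
      proof (intro allI impI)
        fix y assume y: "\<forall>i\<in>insert r D. y i = (c(r:=True)) i"
        then have y': "\<forall>i\<in>D. y i = c i" using rD by auto
        have "{A\<in>Pow S. dt_eval t1 (upd y S A)} = {A\<in>Pow S. dt_eval (Node r t0 t1) (upd y S A)}"
          using y rD rS by (auto simp: upd_def)
        then show "odd (card {A\<in>Pow S. dt_eval t1 (upd y S A)})" using Node.prems(2) y' by simp
      qed
      have p0: "\<forall>y. (\<forall>i\<in>insert r D. y i = (c(r:=False)) i) \<longrightarrow> odd (card {A\<in>Pow S. dt_eval t0 (upd y S A)})"
      proof (intro allI impI)
        fix y assume y: "\<forall>i\<in>insert r D. y i = (c(r:=False)) i"
        then have y': "\<forall>i\<in>D. y i = c i" using rD by auto
        have "{A\<in>Pow S. dt_eval t0 (upd y S A)} = {A\<in>Pow S. dt_eval (Node r t0 t1) (upd y S A)}"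
          using y rD rS by (auto simp: upd_def)
        then show "odd (card {A\<in>Pow S. dt_eval t0 (upd y S A)})" using Node.prems(2) y' by simp
      qed
      from Node.IH(1)[OF d1 p0] obtain T0 where
        T0: "dt_vars T0 \<subseteq> dt_vars t0 \<and> dt_depth T0 + 1 \<le> dt_depth t0 \<and>
      (\<forall>x. (\<forall>i\<in>insert r D. x i = (c(r:=False)) i) \<longrightarrow> dt_eval T0 x = dt_eval t0 (\<lambda>i. if i\<in>S then \<xi> i else x i))"
        by blast
      from Node.IH(2)[OF d1 p1] obtain T1 where
        T1: "dt_vars T1 \<subseteq> dt_vars t1 \<and> dt_depth T1 + 1 \<le> dt_depth t1 \<and>
      (\<forall>x. (\<forall>i\<in>insert r D. x i = (c(r:=True)) i) \<longrightarrow> dt_eval T1 x = dt_eval t1 (\<lambda>i. if i\<in>S then \<xi> i else x i))"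
        by blast
      show ?thesis
      proof (intro exI[of _ "Node r T0 T1"] conjI allI impI)
        show "dt_vars (Node r T0 T1) \<subseteq> dt_vars (Node r t0 t1)" using T0 T1 by auto
        show "dt_depth (Node r T0 T1) + 1 \<le> dt_depth (Node r t0 t1)" using T0 T1 by auto
        fix x assume x: "\<forall>i\<in>D. x i = c i"
        show "dt_eval (Node r T0 T1) x = dt_eval (Node r t0 t1) (\<lambda>i. if i\<in>S then \<xi> i else x i)"
        proof (cases "x r")
          case True
          then have "\<forall>i\<in>insert r D. x i = (c(r:=True)) i" using x rD by auto
          then show ?thesis using T1 True rS by auto
        next
          case False
          then have "\<forall>i\<in>insert r D. x i = (c(r:=False)) i" using x rD by auto
          then show ?thesis using T0 False rS by auto
        qed
      qed
    qed
  qed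
qed


lemma odd_sum:
  assumes "finite A"
  shows "odd (\<Sum>a\<in>A. (g a::nat)) \<longleftrightarrow> odd (card {a\<in>A. odd (g a)})"
  using assms
proof (induction A rule: finite_induct)
  case empty then show ?case by simp
next
  case (insert x F)
  have fin: "finite {a\<in>F. odd (g a)}" using insert by auto
  show ?case
  proof (cases "odd (g x)")
    case True
    then have "{a\<in>insert x F. odd (g a)} = insert x {a\<in>F. odd (g a)}" by auto
    then show ?thesis using insert True fin by auto
  next
    case False
    then have "{a\<in>insert x F. odd (g a)} = {a\<in>F. odd (g a)}" by auto
    then show ?thesis using insert False by auto
  qed
qed

lemma single_count:
  assumes "finite S" "T \<noteq> S" "\<not> S \<subseteq> T"
  shows "even (card {A\<in>Pow S. \<forall>i\<in>T. upd y S A i})"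
proof (cases "\<forall>i\<in>T-S. y i")
  case False
  then obtain j where j: "j \<in> T" "j \<notin> S" "\<not> y j" by blast
  then have e: "{A\<in>Pow S. \<forall>i\<in>T. upd y S A i} = {}" by (auto simp: upd_def)
  show ?thesis by (simp only: e card.empty) simp
next
  case True
  have eq: "{A\<in>Pow S. \<forall>i\<in>T. upd y S A i} = (\<lambda>B. (T\<inter>S) \<union> B) ` Pow (S-T)"
  proof
    show "{A\<in>Pow S. \<forall>i\<in>T. upd y S A i} \<subseteq> (\<lambda>B. (T\<inter>S) \<union> B) ` Pow (S-T)"
    proof
      fix A assume A: "A \<in> {A\<in>Pow S. \<forall>i\<in>T. upd y S A i}"
      then have "A = (T\<inter>S) \<union> (A - T)" by (auto simp: upd_def)
      moreover have "A - T \<in> Pow (S-T)" using A by auto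
      ultimately show "A \<in> (\<lambda>B. (T\<inter>S) \<union> B) ` Pow (S-T)" by blast
    qed
  next
    show "(\<lambda>B. (T\<inter>S) \<union> B) ` Pow (S-T) \<subseteq> {A\<in>Pow S. \<forall>i\<in>T. upd y S A i}"
      using True by (auto simp: upd_def)
  qed
  have inj: "inj_on (\<lambda>B. (T\<inter>S) \<union> B) (Pow (S-T))"
    by (rule inj_onI) blast
  have "card {A\<in>Pow S. \<forall>i\<in>T. upd y S A i} = 2 ^ card (S - T)"
    unfolding eq using card_image[OF inj] assms(1) by (simp add: card_Pow)
  moreover have "card (S - T) > 0" using assms by auto
  ultimately show ?thesis by simp
qed

lemma card_ind:
  "finite A \<Longrightarrow> card {x\<in>A. P x} = (\<Sum>x\<in>A. if P x then 1 else 0)"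
  by (simp add: sum.If_cases Int_def conj_commute)

lemma bridge:
  assumes finM: "finite M" and SM: "S \<in> M" and mx: "\<forall>T\<in>M. T \<noteq> S \<longrightarrow> \<not> S \<subseteq> T"
    and finS: "finite S"
  shows "odd (card {A\<in>Pow S. odd (card {T\<in>M. \<forall>i\<in>T. upd y S A i})})"
proof -
  let ?Q = "\<lambda>A T. \<forall>i\<in>T. upd y S A i"
  have fP: "finite (Pow S)" using finS by simp
  have "odd (card {A\<in>Pow S. odd (card {T\<in>M. ?Q A T})}) \<longleftrightarrow> odd (\<Sum>A\<in>Pow S. card {T\<in>M. ?Q A T})"
    using odd_sum[OF fP] by simp
  also have "(\<Sum>A\<in>Pow S. card {T\<in>M. ?Q A T}) = (\<Sum>A\<in>Pow S. \<Sum>T\<in>M. if ?Q A T then 1 else 0)"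
    using finM by (simp add: card_ind)
  also have "\<dots> = (\<Sum>T\<in>M. \<Sum>A\<in>Pow S. if ?Q A T then 1 else 0)"
    by (rule sum.swap)
  also have "\<dots> = (\<Sum>T\<in>M. card {A\<in>Pow S. ?Q A T})"
    by (intro sum.cong refl) (rule card_ind[OF fP, symmetric])
  finally have "odd (card {A\<in>Pow S. odd (card {T\<in>M. ?Q A T})}) \<longleftrightarrow> odd (\<Sum>T\<in>M. card {A\<in>Pow S. ?Q A T})" .
  also have "\<dots> \<longleftrightarrow> odd (card {T\<in>M. odd (card {A\<in>Pow S. ?Q A T})})"
    using odd_sum[OF finM] by simp
  also have "{T\<in>M. odd (card {A\<in>Pow S. ?Q A T})} = {S}"
  proof -
    have "{A\<in>Pow S. ?Q A S} = {S}" by (auto simp: upd_def)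
    moreover have "\<And>T. T \<in> M \<Longrightarrow> T \<noteq> S \<Longrightarrow> even (card {A\<in>Pow S. ?Q A T})"
      using single_count[OF finS] mx by blast
    ultimately show ?thesis using SM by auto
  qed
  finally show ?thesis by simp
qed

theorem mainTheorem14:
  fixes n d :: nat and f :: "(nat \<Rightarrow> bool) \<Rightarrow> bool" and M :: "nat set set" and S :: "nat set"
  assumes "d \<ge> 1"
    and "is_depth_dt n d f"
    and "is_F2_poly_rep n f M"
    and "maximal_monomial M S"
  shows "\<forall>\<xi> :: nat \<Rightarrow> bool. is_depth_dt n (d - 1) (restrict_fun f S \<xi>)"
proof
  fix \<xi> :: "nat \<Rightarrow> bool"
  obtain T where T: "dt_vars T \<subseteq> {..<n}" "dt_depth T \<le> d" "dt_eval T = f"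
    using assms(2) unfolding is_depth_dt_def by blast
  have Msub: "M \<subseteq> Pow {..<n}" and fM: "\<And>x. f x = odd (card {S \<in> M. \<forall>i\<in>S. x i})"
    using assms(3) unfolding is_F2_poly_rep_def by auto
  have finM: "finite M" using Msub finite_subset by (metis finite_Pow_iff finite_lessThan)
  have SM: "S \<in> M" and mx: "\<forall>T\<in>M. T \<noteq> S \<longrightarrow> \<not> S \<subseteq> T"
    using assms(4) unfolding maximal_monomial_def by auto
  have finS: "finite S" using SM Msub finite_subset by blast
  have hp: "\<And>y. odd (card {A\<in>Pow S. dt_eval T (upd y S A)})"
    using bridge[OF finM SM mx finS] T(3) fM by simp
  show "is_depth_dt n (d - 1) (restrict_fun f S \<xi>)"
  proof (cases "S = {}")
    case True
    have "\<And>x. f x" 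
    proof -
      fix x
      have "{A\<in>Pow S. dt_eval T (upd x S A)} = (if f x then {{}} else {})"
        using True T(3) by (auto simp: upd_def)
      then show "f x" using hp[of x] by (auto split: if_splits)
    qed
    then show ?thesis unfolding is_depth_dt_def restrict_fun_def
      by (intro exI[of _ "Leaf True"]) auto
  next
    case False
    from key[OF finS False, of "{}" undefined T \<xi>] hp obtain T' where
      T': "dt_vars T' \<subseteq> dt_vars T" "dt_depth T' + 1 \<le> dt_depth T"
        "\<And>x. dt_eval T' x = dt_eval T (\<lambda>i. if i\<in>S then \<xi> i else x i)" by auto
    have "dt_eval T' = restrict_fun f S \<xi>"
      unfolding restrict_fun_def T(3)[symmetric] by (rule ext) (rule T'(3))
    then show ?thesis unfolding is_depth_dt_def
      using T T' by (intro exI[of _ T']) auto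
  qed
qed

end
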